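(* Against a non-adaptive adversary, every online algorithm (deterministic or randomized) has competitive ratio $\Omega(\log n)$ with respect to the \textsc{Min-Max} objective, where $n$ is the number of agents.
   Context: An instance $\mathcal{I}=(N,P,T,(\mathbf{D}_i)_{i\in N})$ has agents $N=[n]$, projects $P$, timesteps $T=[\ell]$, and disapproval sets $D_{ik}\subseteq P$. An outcome is $\mathbf{o}\in P^\ell$ and $d_i(\mathbf{o})=|\{k\in T:o_k\in D_{ik}\}|$. An online algorithm chooses each $o_k$ (possibly at random) based only on $(D_{it})_{i\in N,t\in[k]}$. A non-adaptive adversary fixes the (possibly randomly drawn) instance without access to the algorithm's random choices. The competitive ratio of $\mathcal{B}$ with respect to \textsc{Min-Max} is the supremum over instances of the ratio between the (expected) value $\max_i d_i(\mathcal{B}(\mathcal{I}))$ and the optimum $\min_{\mathbf{o}}\max_i d_i(\mathbf{o})$. *)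

theory Defs
  imports "HOL-Probability.Probability"
begin

text \<open>Agents are 0..<n, projects are natural numbers (a finite nonempty set P),
  timesteps are 0..<l. A disapproval profile is D :: agent => timestep => project set.\<close>

type_synonym profile = "nat \<Rightarrow> nat \<Rightarrow> nat set"

definition dis :: "profile \<Rightarrow> nat \<Rightarrow> nat list \<Rightarrow> nat" where
  "dis D i os = card {k. k < length os \<and> os ! k \<in> D i k}"

definition maxdis :: "nat \<Rightarrow> profile \<Rightarrow> nat list \<Rightarrow> nat" where
  "maxdis n D os = Max ((\<lambda>i. dis D i os) ` {0..<n})"

definition outcomes :: "nat set \<Rightarrow> nat \<Rightarrow> nat list set" where
  "outcomes P l = {os. length os = l \<and> set os \<subseteq> P}"

definition opt :: "nat \<Rightarrow> nat set \<Rightarrow> nat \<Rightarrow> profile \<Rightarrow> nat" where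
  "opt n P l D = Min (maxdis n D ` outcomes P l)"

text \<open>A (possibly randomized) online algorithm, as a behavioural strategy: given the
  project set, the disapproval sets of all agents at timesteps 0..k (one function
  agent => set per timestep) and its own previous choices o_0..o_{k-1}, it outputs a
  distribution over the project chosen at timestep k.\<close>

type_synonym alg = "nat set \<Rightarrow> (nat \<Rightarrow> nat set) list \<Rightarrow> nat list \<Rightarrow> nat pmf"

definition valid_alg :: "alg \<Rightarrow> bool" where
  "valid_alg A \<longleftrightarrow> (\<forall>P hs os. finite P \<and> P \<noteq> {} \<longrightarrow> set_pmf (A P hs os) \<subseteq> P)"

definition prefix_profiles :: "nat \<Rightarrow> profile \<Rightarrow> nat \<Rightarrow> (nat \<Rightarrow> nat set) list" where
  "prefix_profiles n D k = map (\<lambda>t i. if i < n then D i t else {}) [0..<Suc k]"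

fun run :: "alg \<Rightarrow> nat \<Rightarrow> nat set \<Rightarrow> profile \<Rightarrow> nat \<Rightarrow> nat list pmf" where
  "run A n P D 0 = return_pmf []"
| "run A n P D (Suc k) =
     bind_pmf (run A n P D k)
       (\<lambda>os. map_pmf (\<lambda>p. os @ [p]) (A P (prefix_profiles n D k) os))"

definition instances :: "nat \<Rightarrow> (nat set \<times> nat \<times> profile) set" where
  "instances n = {(P, l, D). finite P \<and> P \<noteq> {} \<and> (\<forall>i<n. \<forall>k<l. D i k \<subseteq> P)}"

definition exp_cost :: "alg \<Rightarrow> nat \<Rightarrow> nat set \<Rightarrow> nat \<Rightarrow> profile \<Rightarrow> real" where
  "exp_cost A n P l D = measure_pmf.expectation (run A n P D l) (\<lambda>os. real (maxdis n D os))"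

definition comp_ratio :: "alg \<Rightarrow> nat \<Rightarrow> ereal" where
  "comp_ratio A n = (SUP x \<in> instances n.
      (case x of (P, l, D) \<Rightarrow> ereal (exp_cost A n P l D / real (opt n P l D))))"

end

theory Submission imports Defs begin

definition DD :: "nat \<Rightarrow> (nat \<Rightarrow> bool) \<Rightarrow> profile" where
  "DD m b i t = (if i < 2^m \<and> t < m \<and> (\<forall>s<t. bit i s = b s) then {of_bool (bit i t)} else {})"

definition pr1 :: "alg \<Rightarrow> nat \<Rightarrow> nat \<Rightarrow> (nat \<Rightarrow> bool) \<Rightarrow> nat \<Rightarrow> real" where
  "pr1 A n m f t = measure_pmf.prob (run A n {0,1} (DD m f) (Suc t)) {os. os!t = 1}"

fun gg :: "alg \<Rightarrow> nat \<Rightarrow> nat \<Rightarrow> nat \<Rightarrow> (nat \<Rightarrow> bool)" where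
  "gg A n m 0 = (\<lambda>_. False)"
| "gg A n m (Suc t) = (gg A n m t)(t := (pr1 A n m (gg A n m t) t \<ge> 1/2))"

lemma run_support:
  assumes "valid_alg A" "finite P" "P \<noteq> {}"
  shows "os \<in> set_pmf (run A n P D k) \<Longrightarrow> length os = k \<and> set os \<subseteq> P"
proof (induction k arbitrary: os)
  case 0 then show ?case by simp
next
  case (Suc k)
  from Suc.prems obtain os0 p where "os0 \<in> set_pmf (run A n P D k)"
    "p \<in> set_pmf (A P (prefix_profiles n D k) os0)" "os = os0 @ [p]" by auto
  moreover have "p \<in> P" using assms(1) \<open>p \<in> set_pmf _\<close> assms(2,3) unfolding valid_alg_def by blast
  ultimately show ?case using Suc.IH by auto
qed

lemma run_take:
  assumes "valid_alg A" "finite P" "P \<noteq> {}"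
  shows "k \<le> j \<Longrightarrow> map_pmf (take k) (run A n P D j) = run A n P D k"
proof (induction j)
  case 0 then show ?case by simp
next
  case (Suc j)
  show ?case
  proof (cases "k = Suc j")
    case True
    have "map_pmf (take k) (run A n P D (Suc j)) = map_pmf id (run A n P D (Suc j))"
      apply (rule map_pmf_cong) using run_support[OF assms] True by auto
    then show ?thesis using True by (simp add: pmf.map_id)
  next
    case False
    then have kj: "k \<le> j" using Suc by simp
    have "map_pmf (take k) (run A n P D (Suc j)) =
       bind_pmf (run A n P D j) (\<lambda>os. map_pmf (\<lambda>p. take k (os @ [p])) (A P (prefix_profiles n D j) os))"
      by (simp add: map_bind_pmf pmf.map_comp o_def)
    also have "\<dots> = bind_pmf (run A n P D j) (\<lambda>os. return_pmf (take k os))"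
      apply (rule bind_pmf_cong, simp)
      using run_support[OF assms] kj by (auto simp: map_pmf_const)
    also have "\<dots> = map_pmf (take k) (run A n P D j)" by (simp add: map_pmf_def)
    finally show ?thesis using Suc kj by simp
  qed
qed

lemma run_local:
  assumes "\<forall>s<k. f s = f' s"
  shows "j \<le> Suc k \<Longrightarrow> run A n P (DD m f) j = run A n P (DD m f') j"
proof (induction j)
  case 0 then show ?case by simp
next
  case (Suc j)
  have "prefix_profiles n (DD m f) j = prefix_profiles n (DD m f') j"
    unfolding prefix_profiles_def DD_def using assms Suc.prems
    by (intro map_cong refl ext) auto
  then show ?case using Suc by simp
qed

lemma gg_agree: "t \<le> u \<Longrightarrow> s < t \<Longrightarrow> gg A n m u s = gg A n m t s"
  by (induction u) (auto simp: le_Suc_eq)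

lemma survivor: "\<exists>i<2^m. \<forall>s<m. bit (i::nat) s = b s"
proof (induction m arbitrary: b)
  case 0 then show ?case by simp
next
  case (Suc m)
  obtain i where i: "i < 2^m" "\<forall>s<m. bit (i::nat) s = b (Suc s)" using Suc[of "\<lambda>s. b (Suc s)"] by blast
  define j where "j = of_bool (b 0) + 2 * i"
  have "j < 2^Suc m" using i unfolding j_def by auto
  moreover have "\<forall>s<Suc m. bit j s = b s"
  proof (intro allI impI)
    fix s assume "s < Suc m"
    then show "bit j s = b s" using i unfolding j_def
      by (cases s) (simp_all add: bit_Suc bit_0)
  qed
  ultimately show ?case by blast
qed

lemma fin_run: "valid_alg A \<Longrightarrow> finite (set_pmf (run A n {0,1} D k))"
proof -
  assume v: "valid_alg A"
  have "set_pmf (run A n {0,1} D k) \<subseteq> {os. set os \<subseteq> {0,1} \<and> length os = k}"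
  proof
    fix os assume "os \<in> set_pmf (run A n {0,1} D k)"
    from run_support[OF v _ _ this] show "os \<in> {os. set os \<subseteq> {0,1} \<and> length os = k}" by simp
  qed
  moreover have "finite {os. set os \<subseteq> ({0,1}::nat set) \<and> length os = k}"
    by (rule finite_lists_length_eq) simp
  ultimately show ?thesis by (rule finite_subset)
qed

lemma pr_half:
  assumes v: "valid_alg A"
  shows "measure_pmf.prob (run A n {0,1} (DD m (gg A n m t)) (Suc t)) {os. os!t = of_bool (gg A n m (Suc t) t)} \<ge> 1/2"
proof -
  let ?M = "run A n {0,1} (DD m (gg A n m t)) (Suc t)"
  show ?thesis
  proof (cases "pr1 A n m (gg A n m t) t \<ge> 1/2")
    case True
    then show ?thesis by (simp add: pr1_def)
  next
    case False
    have c: "measure_pmf.prob ?M (UNIV - {os. os!t = 1}) = 1 - measure_pmf.prob ?M {os. os!t = 1}"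
      using measure_pmf.prob_compl[of "{os. os!t = 1}" ?M] by simp
    have "measure_pmf.prob ?M (UNIV - {os. os!t = 1}) = measure_pmf.prob ?M ((UNIV - {os. os!t = 1}) \<inter> set_pmf ?M)"
      by (simp only: measure_Int_set_pmf)
    also have "\<dots> \<le> measure_pmf.prob ?M {os. os!t = 0}"
    proof (rule measure_pmf.finite_measure_mono)
      show "(UNIV - {os. os ! t = 1}) \<inter> set_pmf ?M \<subseteq> {os. os ! t = 0}"
      proof
        fix os assume "os \<in> (UNIV - {os. os ! t = 1}) \<inter> set_pmf ?M"
        then have "os!t \<noteq> 1" "os \<in> set_pmf ?M" by auto
        from run_support[OF v _ _ this(2)] have "length os = Suc t \<and> set os \<subseteq> {0,1}" by simp
        then have "os!t \<in> set os" by simp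
        then have "os!t \<in> {0,1}" using \<open>length os = Suc t \<and> set os \<subseteq> {0,1}\<close> by blast
        then show "os \<in> {os. os ! t = 0}" using \<open>os!t \<noteq> 1\<close> by auto
      qed
    qed simp
    finally show ?thesis using False c by (simp add: pr1_def)
  qed
qed

lemma prob_t:
  assumes v: "valid_alg A" and t: "t < m"
  shows "measure_pmf.prob (run A n {0,1} (DD m (gg A n m m)) m) {os. os!t = of_bool (gg A n m m t)} \<ge> 1/2"
proof -
  let ?b = "gg A n m m"
  have e1: "gg A n m m t = gg A n m (Suc t) t" using gg_agree[of "Suc t" m t] t by simp
  have "measure_pmf.prob (run A n {0,1} (DD m ?b) m) {os. os!t = of_bool (?b t)}
      = measure_pmf.prob (run A n {0,1} (DD m ?b) m) (take (Suc t) -` {os. os!t = of_bool (?b t)})"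
    by (rule arg_cong[where f="measure_pmf.prob _"]) auto
  also have "\<dots> = measure_pmf.prob (map_pmf (take (Suc t)) (run A n {0,1} (DD m ?b) m)) {os. os!t = of_bool (?b t)}"
    by (simp add: measure_map_pmf)
  also have "\<dots> = measure_pmf.prob (run A n {0,1} (DD m ?b) (Suc t)) {os. os!t = of_bool (?b t)}"
    using run_take[OF v, of "{0,1}" "Suc t" m] t by simp
  also have "run A n {0,1} (DD m ?b) (Suc t) = run A n {0,1} (DD m (gg A n m t)) (Suc t)"
    by (rule run_local[where k=t]) (use gg_agree[of t m _ A n m] t in auto)
  finally show ?thesis using pr_half[OF v, of n m t] e1 by simp
qed

lemma card_sum: "real (card {k. k < (m::nat) \<and> P k}) = (\<Sum>k<m. if P k then 1 else 0)"
proof (induction m)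
  case 0 then show ?case by simp
next
  case (Suc m)
  have "{k. k < Suc m \<and> P k} = {k. k < m \<and> P k} \<union> (if P m then {m} else {})" by (auto simp: less_Suc_eq)
  then show ?case using Suc by (simp add: card_Un_disjoint)
qed

lemma exp_sum_ind:
  fixes M :: "'a pmf"
  assumes "finite (set_pmf M)"
  shows "measure_pmf.expectation M (\<lambda>x. \<Sum>t\<in>I. (indicator (S t) x :: real)) = (\<Sum>t\<in>I. measure_pmf.prob M (S t))"
  by (subst Bochner_Integration.integral_sum) (auto simp: integrable_measure_pmf_finite[OF assms])

lemma cost_lower:
  assumes v: "valid_alg A" and n: "2^m \<le> n"
  shows "exp_cost A n {0,1} m (DD m b) \<ge> (\<Sum>t<m. measure_pmf.prob (run A n {0,1} (DD m b) m) {os. os!t = of_bool (b t)})"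
proof -
  let ?M = "run A n {0,1} (DD m b) m"
  obtain i where i: "i < 2^m" "\<forall>s<m. bit (i::nat) s = b s" using survivor by blast
  have fin: "finite (set_pmf ?M)" using fin_run[OF v] .
  have "(\<Sum>t<m. measure_pmf.prob ?M {os. os!t = of_bool (b t)})
      = measure_pmf.expectation ?M (\<lambda>os. \<Sum>t<m. indicator {os. os!t = of_bool (b t)} os)"
    by (rule exp_sum_ind[OF fin, symmetric])
  also have "\<dots> \<le> measure_pmf.expectation ?M (\<lambda>os. real (maxdis n (DD m b) os))"
  proof (rule integral_mono_AE)
    show "integrable (measure_pmf ?M) (\<lambda>os. \<Sum>t<m. indicator {os. os!t = of_bool (b t)} os :: real)"
      by (rule integrable_measure_pmf_finite[OF fin])
    show "integrable (measure_pmf ?M) (\<lambda>os. real (maxdis n (DD m b) os))"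
      by (rule integrable_measure_pmf_finite[OF fin])
    show "AE os in measure_pmf ?M. (\<Sum>t<m. indicator {os. os!t = of_bool (b t)} os) \<le> real (maxdis n (DD m b) os)"
    proof (rule AE_pmfI)
      fix os assume "os \<in> set_pmf ?M"
      then have len: "length os = m" using run_support[OF v, of "{0,1}"] by auto
      have "{k. k < length os \<and> os ! k \<in> DD m b i k} = {k. k < m \<and> os!k = of_bool (b k)}"
        using i len by (auto simp: DD_def)
      then have "real (dis (DD m b) i os) = (\<Sum>t<m. if os!t = of_bool (b t) then 1 else 0)"
        unfolding dis_def by (simp only: card_sum)
      also have "\<dots> = (\<Sum>t<m. indicator {os. os!t = of_bool (b t)} os)"
        by (rule sum.cong) (auto simp: indicator_def)
      finally have "real (dis (DD m b) i os) = (\<Sum>t<m. indicator {os. os!t = of_bool (b t)} os)" .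
      moreover have "dis (DD m b) i os \<le> maxdis n (DD m b) os"
        unfolding maxdis_def using i n by (intro Max_ge) auto
      ultimately show "(\<Sum>t<m. indicator {os. os!t = of_bool (b t)} os) \<le> real (maxdis n (DD m b) os)"
        by simp
    qed
  qed
  finally show ?thesis unfolding exp_cost_def .
qed

lemma opt_one:
  assumes m: "1 \<le> m" and n: "2^m \<le> n"
  shows "opt n {0,1} m (DD m b) = 1"
proof -
  let ?O = "outcomes {0,1} m"
  have finO: "finite ?O" unfolding outcomes_def
    using finite_lists_length_eq[of "{0::nat,1}" m] by (simp add: conj_commute)
  define w :: "nat list" where "w = map (\<lambda>t. of_bool (\<not> b t)) [0..<m]"
  have wO: "w \<in> ?O" by (auto simp: outcomes_def w_def)
  have dw: "dis (DD m b) i w \<le> 1" for i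
  proof -
    let ?S = "{k. k < length w \<and> w ! k \<in> DD m b i k}"
    have "finite ?S" by simp
    moreover have "\<forall>k1\<in>?S. \<forall>k2\<in>?S. k1 = k2"
    proof (intro ballI)
      fix k1 k2 assume k1: "k1 \<in> ?S" and k2: "k2 \<in> ?S"
      have key: "k1 < k2 \<Longrightarrow> False" if "k1 \<in> ?S" "k2 \<in> ?S" for k1 k2
      proof -
        assume lt: "k1 < k2"
        from that(2) have "\<forall>s<k2. bit i s = b s" by (auto simp: DD_def w_def split: if_splits)
        then have "bit i k1 = b k1" using lt by blast
        moreover from that(1) have "w!k1 \<in> DD m b i k1" "k1 < m" by (auto simp: w_def)
        moreover then have "w!k1 = of_bool (\<not> b k1)" by (simp add: w_def)
        ultimately have "of_bool (\<not> b k1) \<in> DD m b i k1" by simp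
        then have "bit i k1 = (\<not> b k1)"
          by (cases "b k1"; cases "bit i k1") (simp_all add: DD_def split: if_splits)
        with \<open>bit i k1 = b k1\<close> show False by (cases "b k1") simp_all
      qed
      show "k1 = k2" using key[OF k1 k2] key[OF k2 k1] by (cases k1 k2 rule: linorder_cases) auto
    qed
    ultimately have "card ?S \<le> Suc 0" using card_le_Suc0_iff_eq by blast
    then show ?thesis unfolding dis_def by simp
  qed
  have mw: "maxdis n (DD m b) w \<le> 1"
  proof -
    have "(0::nat) < 2^m" by simp
    then have "0 < n" using n by linarith
    then show ?thesis unfolding maxdis_def using dw by (subst Max_le_iff) auto
  qed
  have ge: "1 \<le> maxdis n (DD m b) os" if "os \<in> ?O" for os
  proof -
    have len: "length os = m" and so: "set os \<subseteq> {0,1}" using that by (auto simp: outcomes_def)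
    have "os ! 0 \<in> set os" using len m by simp
    then have j: "os ! 0 \<in> {0,1}" using so by blast
    let ?j = "os ! 0"
    have "(2::nat) \<le> 2^m" using m by (metis power_increasing power_one_right one_le_numeral)
    then have jn: "?j < n" using j n by auto
    have jl: "?j < 2^m" using j \<open>(2::nat) \<le> 2^m\<close> by auto
    have "0 \<in> {k. k < length os \<and> os ! k \<in> DD m b ?j k}"
      using j jl len m by (auto simp: DD_def bit_0)
    moreover have "finite {k. k < length os \<and> os ! k \<in> DD m b ?j k}" by simp
    ultimately have "0 < card {k. k < length os \<and> os ! k \<in> DD m b ?j k}"
      using card_gt_0_iff by blast
    then have "1 \<le> dis (DD m b) ?j os" unfolding dis_def by simp
    also have "\<dots> \<le> maxdis n (DD m b) os" unfolding maxdis_def using jn by (intro Max_ge) auto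
    finally show ?thesis .
  qed
  have "Min (maxdis n (DD m b) ` ?O) \<le> maxdis n (DD m b) w"
    using finO wO by (intro Min_le) auto
  then have "opt n {0,1} m (DD m b) \<le> 1" unfolding opt_def using mw by linarith
  moreover have "1 \<le> opt n {0,1} m (DD m b)" unfolding opt_def
    using Min_in[of "maxdis n (DD m b) ` ?O"] finO wO ge by fastforce
  ultimately show ?thesis by simp
qed

theorem proposition4:
  shows "\<exists>c>0. \<exists>N. \<forall>n\<ge>N. \<forall>A. valid_alg A \<longrightarrow> comp_ratio A n \<ge> ereal (c * ln (real n))"
proof (intro exI[of _ "1/4"] conjI exI[of _ 2] allI impI, simp)
  fix n :: nat and A assume n2: "2 \<le> n" and v: "valid_alg A"
  obtain m where m: "2^m \<le> n" "n < 2^(m+1)" using ex_power_ivl1[of 2 n] n2 by auto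
  have m1: "1 \<le> m"
  proof (rule ccontr)
    assume "\<not> 1 \<le> m" then have "m = 0" by simp
    then show False using m n2 by simp
  qed
  define b where "b = gg A n m m"
  have inst: "({0,1}, m, DD m b) \<in> instances n"
    unfolding instances_def DD_def by auto
  have "(\<Sum>t<m. (1/2::real)) \<le> (\<Sum>t<m. measure_pmf.prob (run A n {0,1} (DD m b) m) {os. os!t = of_bool (b t)})"
    by (rule sum_mono) (use prob_t[OF v] b_def in auto)
  also have "\<dots> \<le> exp_cost A n {0,1} m (DD m b)" by (rule cost_lower[OF v m(1)])
  finally have ec: "real m / 2 \<le> exp_cost A n {0,1} m (DD m b)" by simp
  have "ln (real n) < ln (2 ^ (m+1))"
    using m(2) n2 by (subst ln_less_cancel_iff) (auto simp del: power_Suc)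
  also have "\<dots> = real (m+1) * ln 2" by (rule ln_realpow; simp)
  also have "\<dots> \<le> real (m+1)" using ln_2_less_1 by (simp add: mult_left_le)
  finally have "ln (real n) \<le> 2 * real m" using m1 by simp
  then have "1/4 * ln (real n) \<le> exp_cost A n {0,1} m (DD m b) / real (opt n {0,1} m (DD m b))"
    using ec opt_one[OF m1 m(1)] by simp
  also have "ereal \<dots> \<le> comp_ratio A n"
    unfolding comp_ratio_def
    by (rule SUP_upper2[OF inst]) simp
  finally show "ereal (1/4 * ln (real n)) \<le> comp_ratio A n" by simp
qed

end
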